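(* Let $K\ge 2$ and let $\mathbf{Q}^\star,\mathbf{Q}_r,\mathbf{z}^\star,\mathbf{z}_r$ be as in the context. Then $$\left|\mathbf{z}^{\star\dagger}\mathbf{Q}^\star\mathbf{z}^\star-\mathbf{z}_r^\dagger\mathbf{Q}^\star\mathbf{z}_r\right|\le 2n\,\|\mathbf{Q}^\star-\mathbf{Q}_r\|_2.$$
   Context: $\mathcal{A}_K=\{\exp(2\pi\mathrm{i}k/K):k=0,\dots,K-1\}$. $\mathbf{Q}^\star\in\mathbb{C}^{n\times n}$ is Hermitian positive semi-definite; $\mathbf{H}\in\mathbb{C}^{n\times n}$ arbitrary; $\mathbf{Q}=\mathbf{Q}^\star+\mathbf{H}$. $\mathbf{Q}_r=\mathbf{V}_r\boldsymbol{\Sigma}_r\mathbf{V}_r^\dagger$ with $\boldsymbol{\Sigma}_r$ the top-$r$ singular values of $\mathbf{Q}$ and $\mathbf{V}_r$ the corresponding left singular vectors. $\mathbf{z}^\star$ attains $\max_{\mathbf{z}\in\mathcal{A}_K^n}\mathbf{z}^\dagger\mathbf{Q}^\star\mathbf{z}$ and $\mathbf{z}_r$ attains $\max_{\mathbf{z}\in\mathcal{A}_K^n}\mathbf{z}^\dagger\mathbf{Q}_r\mathbf{z}$. $\|\cdot\|_2$ is the spectral norm. *)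

theory Defs
  imports "Jordan_Normal_Form.Schur_Decomposition" "Jordan_Normal_Form.Char_Poly"
begin

definition phase_alphabet :: "nat \<Rightarrow> complex set" where
  "phase_alphabet K = {exp (2 * pi * \<i> * of_nat k / of_nat K) | k. k < K}"

definition phase_vecs :: "nat \<Rightarrow> nat \<Rightarrow> complex vec set" where
  "phase_vecs K n = {z \<in> carrier_vec n. \<forall>i<n. z $ i \<in> phase_alphabet K}"

definition qform :: "complex mat \<Rightarrow> complex vec \<Rightarrow> complex" where
  "qform A z = conjugate z \<bullet> (A *\<^sub>v z)"

definition hermitian :: "complex mat \<Rightarrow> bool" where
  "hermitian A \<longleftrightarrow> A \<in> carrier_mat (dim_row A) (dim_row A) \<and> mat_adjoint A = A"

definition psd :: "complex mat \<Rightarrow> bool" where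
  "psd A \<longleftrightarrow> hermitian A \<and> (\<forall>x \<in> carrier_vec (dim_row A). 0 \<le> Re (qform A x))"

definition vnorm :: "complex vec \<Rightarrow> real" where
  "vnorm v = sqrt (\<Sum>i<dim_vec v. (cmod (v $ i))\<^sup>2)"

definition spec_norm :: "complex mat \<Rightarrow> real" where
  "spec_norm A = Sup {vnorm (A *\<^sub>v x) | x. x \<in> carrier_vec (dim_col A) \<and> vnorm x = 1}"

(* s is the list of singular values of the square matrix Q, in non-increasing order
   (with multiplicity): the squares s_i^2 are the eigenvalues of Q Q^dagger *)
definition singular_values :: "complex mat \<Rightarrow> real list \<Rightarrow> bool" where
  "singular_values Q s \<longleftrightarrow> length s = dim_row Q \<and> sorted_wrt (\<ge>) s \<and> (\<forall>x\<in>set s. 0 \<le> x) \<and>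
     char_poly (Q * mat_adjoint Q) = (\<Prod>x\<leftarrow>s. [:- complex_of_real (x\<^sup>2), 1:])"

(* Qr = V_r Sigma_r V_r^dagger where Sigma_r holds the top-r singular values of Q and
   the (orthonormal) columns of V_r are corresponding left singular vectors of Q *)
definition truncated_svd :: "complex mat \<Rightarrow> nat \<Rightarrow> complex mat \<Rightarrow> bool" where
  "truncated_svd Q r Qr \<longleftrightarrow> (\<exists>s V. singular_values Q s \<and>
     V \<in> carrier_mat (dim_row Q) r \<and> mat_adjoint V * V = 1\<^sub>m r \<and>
     Q * mat_adjoint Q * V = V * mat_diag r (\<lambda>i. complex_of_real ((s ! i)\<^sup>2)) \<and>
     Qr = V * mat_diag r (\<lambda>i. complex_of_real (s ! i)) * mat_adjoint V)"

end

theory Submission imports Defs "HOL-Analysis.L2_Norm" begin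

lemma qform_sum:
  assumes "A \<in> carrier_mat n n" "z \<in> carrier_vec n"
  shows "qform A z = (\<Sum>i<n. \<Sum>j<n. cnj (z$i) * A$$(i,j) * z$j)"
proof -
  have "qform A z = (\<Sum>i<n. cnj (z$i) * (A *\<^sub>v z)$i)"
    using assms unfolding qform_def scalar_prod_def by (simp add: lessThan_atLeast0)
  also have "\<dots> = (\<Sum>i<n. cnj (z$i) * (\<Sum>j<n. A$$(i,j) * z$j))"
    using assms by (intro sum.cong refl) (simp add: scalar_prod_def lessThan_atLeast0)
  finally show ?thesis by (simp add: sum_distrib_left mult.assoc)
qed

lemma herm_entry:
  assumes "hermitian A" "A \<in> carrier_mat n n" "i < n" "j < n"
  shows "A$$(j,i) = cnj (A$$(i,j))"
proof -
  have "mat_adjoint A $$ (j,i) = cnj (A$$(i,j))"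
    using assms unfolding mat_adjoint_def by (simp add: mat_of_rows_def)
  then show ?thesis using assms unfolding hermitian_def by simp
qed

lemma herm_real:
  assumes "hermitian A" "A \<in> carrier_mat n n" "z \<in> carrier_vec n"
  shows "Im (qform A z) = 0"
proof -
  have "cnj (qform A z) = (\<Sum>i<n. \<Sum>j<n. z$i * cnj (A$$(i,j)) * cnj (z$j))"
    unfolding qform_sum[OF assms(2,3)] cnj_sum complex_cnj_mult complex_cnj_cnj ..
  also have "\<dots> = (\<Sum>i<n. \<Sum>j<n. z$i * A$$(j,i) * cnj (z$j))"
    by (intro sum.cong refl) (simp add: herm_entry[OF assms(1,2), symmetric])
  also have "\<dots> = (\<Sum>j<n. \<Sum>i<n. z$i * A$$(j,i) * cnj (z$j))"
    by (rule sum.swap)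
  also have "\<dots> = (\<Sum>j<n. \<Sum>i<n. cnj (z$j) * A$$(j,i) * z$i)"
    by (intro sum.cong refl) (simp add: ac_simps)
  also have "\<dots> = qform A z" by (simp only: qform_sum[OF assms(2,3)])
  finally have "cnj (qform A z) = qform A z" .
  then show ?thesis by (metis Reals_cnj_iff complex_is_Real_iff)
qed

lemma vnorm_L2: "vnorm v = L2_set (\<lambda>i. cmod (v$i)) {..<dim_vec v}"
  unfolding vnorm_def L2_set_def by simp

lemma cs:
  assumes "z \<in> carrier_vec n" "w \<in> carrier_vec n"
  shows "cmod (conjugate z \<bullet> w) \<le> vnorm z * vnorm w"
proof -
  have "conjugate z \<bullet> w = (\<Sum>i<n. cnj (z$i) * w$i)"
    using assms unfolding scalar_prod_def by (simp add: lessThan_atLeast0)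
  then have "cmod (conjugate z \<bullet> w) \<le> (\<Sum>i<n. cmod (cnj (z$i) * w$i))"
    by (simp add: sum_norm_le)
  also have "\<dots> = (\<Sum>i<n. \<bar>cmod (z$i)\<bar> * \<bar>cmod (w$i)\<bar>)"
    by (simp add: norm_mult)
  also have "\<dots> \<le> L2_set (\<lambda>i. cmod (z$i)) {..<n} * L2_set (\<lambda>i. cmod (w$i)) {..<n}"
    by (rule L2_set_mult_ineq)
  also have "\<dots> = vnorm z * vnorm w" using assms by (simp add: vnorm_L2)
  finally show ?thesis .
qed

lemma vnorm_smult: "vnorm (c \<cdot>\<^sub>v x) = cmod c * vnorm x"
proof -
  have "(\<Sum>i<dim_vec x. (cmod ((c \<cdot>\<^sub>v x) $ i))\<^sup>2) = (cmod c)\<^sup>2 * (\<Sum>i<dim_vec x. (cmod (x $ i))\<^sup>2)"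
    by (simp add: sum_distrib_left norm_mult power_mult_distrib)
  then show ?thesis unfolding vnorm_def by (simp add: real_sqrt_mult)
qed

lemma vnorm_nonneg: "vnorm x \<ge> 0" unfolding vnorm_def by (simp add: sum_nonneg)

lemma mv_bound:
  assumes "A \<in> carrier_mat n n" "x \<in> carrier_vec n" "vnorm x = 1"
  shows "vnorm (A *\<^sub>v x) \<le> (\<Sum>i<n. \<Sum>j<n. cmod (A$$(i,j)))"
proof -
  have xb: "cmod (x$j) \<le> 1" if "j < n" for j
    using member_le_L2_set[of "{..<n}" j "\<lambda>i. cmod (x$i)"] that assms by (simp add: vnorm_L2)
  have "vnorm (A *\<^sub>v x) \<le> (\<Sum>i<n. cmod ((A *\<^sub>v x)$i))"
    using L2_set_le_sum[of "{..<n}" "\<lambda>i. cmod ((A *\<^sub>v x)$i)"] assms by (simp add: vnorm_L2)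
  also have "\<dots> \<le> (\<Sum>i<n. \<Sum>j<n. cmod (A$$(i,j)))"
  proof (rule sum_mono)
    fix i assume i: "i \<in> {..<n}"
    have "(A *\<^sub>v x)$i = (\<Sum>j<n. A$$(i,j) * x$j)"
      using assms i by (simp add: scalar_prod_def lessThan_atLeast0)
    then have "cmod ((A *\<^sub>v x)$i) \<le> (\<Sum>j<n. cmod (A$$(i,j) * x$j))"
      by (simp add: sum_norm_le)
    also have "\<dots> \<le> (\<Sum>j<n. cmod (A$$(i,j)))"
      using xb by (intro sum_mono) (simp add: norm_mult mult_left_le)
    finally show "cmod ((A *\<^sub>v x)$i) \<le> (\<Sum>j<n. cmod (A$$(i,j)))" .
  qed
  finally show ?thesis .
qed

lemma spec_bound:
  assumes "A \<in> carrier_mat n n" "x \<in> carrier_vec n" "vnorm x > 0"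
  shows "vnorm (A *\<^sub>v x) \<le> spec_norm A * vnorm x"
proof -
  define c where "c = complex_of_real (1 / vnorm x)"
  define y where "y = c \<cdot>\<^sub>v x"
  have cm: "cmod c = 1 / vnorm x" using assms unfolding c_def norm_of_real by simp
  have y: "y \<in> carrier_vec n" "vnorm y = 1"
    using assms cm unfolding y_def by (auto simp: vnorm_smult)
  have Ay: "A *\<^sub>v y = c \<cdot>\<^sub>v (A *\<^sub>v x)"
    unfolding y_def using assms by (simp add: mult_mat_vec)
  have mem: "vnorm (A *\<^sub>v y) \<in> {vnorm (A *\<^sub>v x) | x. x \<in> carrier_vec (dim_col A) \<and> vnorm x = 1}"
    using y assms by auto
  have bdd: "bdd_above {vnorm (A *\<^sub>v x) | x. x \<in> carrier_vec (dim_col A) \<and> vnorm x = 1}"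
    using mv_bound[OF assms(1)] assms(1) by (intro bdd_aboveI[where M="\<Sum>i<n. \<Sum>j<n. cmod (A$$(i,j))"]) auto
  have "vnorm (A *\<^sub>v y) \<le> spec_norm A"
    unfolding spec_norm_def by (rule cSup_upper[OF mem bdd])
  then have "vnorm (A *\<^sub>v x) / vnorm x \<le> spec_norm A"
    using Ay cm by (simp add: vnorm_smult)
  then show ?thesis using assms(3) by (simp add: pos_divide_le_eq)
qed

lemma phase_norm:
  assumes "z \<in> phase_vecs K n"
  shows "z \<in> carrier_vec n" "vnorm z = sqrt (real n)"
proof -
  show z: "z \<in> carrier_vec n" using assms unfolding phase_vecs_def by auto
  have "cmod (z$i) = 1" if iN: "i < n" for i
  proof -
    obtain k where "z$i = exp (2 * pi * \<i> * of_nat k / of_nat K)"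
      using assms iN unfolding phase_vecs_def phase_alphabet_def by auto
    then show ?thesis by (simp add: norm_exp_eq_Re)
  qed
  then show "vnorm z = sqrt (real n)" using z unfolding vnorm_def by simp
qed

lemma qform_bound:
  assumes "A \<in> carrier_mat n n" "z \<in> phase_vecs K n" "n > 0"
  shows "cmod (qform A z) \<le> real n * spec_norm A"
proof -
  note p = phase_norm[OF assms(2)]
  have "cmod (qform A z) \<le> vnorm z * vnorm (A *\<^sub>v z)"
    unfolding qform_def using p assms by (intro cs) auto
  also have "\<dots> \<le> vnorm z * (spec_norm A * vnorm z)"
    using spec_bound[OF assms(1) p(1)] p assms(3) by (intro mult_left_mono) auto
  also have "\<dots> = real n * spec_norm A" using p by simp
  finally show ?thesis .
qed

lemma qform_minus:
  assumes "A \<in> carrier_mat n n" "B \<in> carrier_mat n n" "z \<in> carrier_vec n"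
  shows "qform (A - B) z = qform A z - qform B z"
proof -
  have "(A - B) *\<^sub>v z = A *\<^sub>v z - B *\<^sub>v z"
    using assms by (simp add: minus_mult_distrib_mat_vec)
  moreover have "conjugate z \<in> carrier_vec n" using assms by simp
  ultimately show ?thesis unfolding qform_def using assms
    by (simp add: scalar_prod_minus_distrib[of _ n])
qed

theorem lemma10:
  fixes n K r :: nat and Qs H Q Qr :: "complex mat" and zs zr :: "complex vec"
  assumes "K \<ge> 2"
    and "Qs \<in> carrier_mat n n" and "psd Qs"
    and "H \<in> carrier_mat n n"
    and "Q = Qs + H"
    and "r \<le> n"
    and "truncated_svd Q r Qr"
    and "zs \<in> phase_vecs K n"
    and "\<forall>z \<in> phase_vecs K n. Re (qform Qs z) \<le> Re (qform Qs zs)"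
    and "zr \<in> phase_vecs K n"
    and "\<forall>z \<in> phase_vecs K n. Re (qform Qr z) \<le> Re (qform Qr zr)"
  shows "cmod (qform Qs zs - qform Qs zr) \<le> 2 * real n * spec_norm (Qs - Qr)"
proof (cases "n = 0")
  case True
  then have "zs = zr" using phase_norm(1)[OF assms(8)] phase_norm(1)[OF assms(10)] by auto
  then show ?thesis using True by simp
next
  case False
  then have n0: "n > 0" by simp
  have dQ: "dim_row Q = n" using assms(2,4,5) by simp
  obtain s V where V: "V \<in> carrier_mat n r"
    and Qr: "Qr = V * mat_diag r (\<lambda>i. complex_of_real (s ! i)) * mat_adjoint V"
    using assms(7) dQ unfolding truncated_svd_def by auto
  have Qrc: "Qr \<in> carrier_mat n n" using V unfolding Qr mat_adjoint_def by auto
  have zs: "zs \<in> carrier_vec n" and zr: "zr \<in> carrier_vec n"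
    using phase_norm(1) assms(8,10) by auto
  have herm: "hermitian Qs" using assms(3) unfolding psd_def by simp
  have i1: "Im (qform Qs zs) = 0" by (rule herm_real[OF herm assms(2) zs])
  have i2: "Im (qform Qs zr) = 0" by (rule herm_real[OF herm assms(2) zr])
  have le: "Re (qform Qs zr) \<le> Re (qform Qs zs)" using assms(9,10) by auto
  have le2: "Re (qform Qr zs) \<le> Re (qform Qr zr)" using assms(11,8) by auto
  have d1: "qform (Qs - Qr) zs = qform Qs zs - qform Qr zs" by (rule qform_minus[OF assms(2) Qrc zs])
  have d2: "qform (Qs - Qr) zr = qform Qs zr - qform Qr zr" by (rule qform_minus[OF assms(2) Qrc zr])
  have DC: "Qs - Qr \<in> carrier_mat n n" using Qrc by (rule minus_carrier_mat)
  have b1: "cmod (qform (Qs - Qr) zs) \<le> real n * spec_norm (Qs - Qr)"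
    by (rule qform_bound[OF DC assms(8) n0])
  have b2: "cmod (qform (Qs - Qr) zr) \<le> real n * spec_norm (Qs - Qr)"
    by (rule qform_bound[OF DC assms(10) n0])
  have r1: "Re (qform (Qs - Qr) zs) \<le> cmod (qform (Qs - Qr) zs)" by (rule complex_Re_le_cmod)
  have r2: "- Re (qform (Qs - Qr) zr) \<le> cmod (qform (Qs - Qr) zr)"
    using abs_Re_le_cmod[of "qform (Qs - Qr) zr"] by linarith
  have "cmod (qform Qs zs - qform Qs zr) = Re (qform Qs zs) - Re (qform Qs zr)"
    using i1 i2 le by (simp add: cmod_def)
  also have "\<dots> \<le> Re (qform (Qs - Qr) zs) - Re (qform (Qs - Qr) zr)"
    using d1 d2 le2 by simp
  also have "\<dots> \<le> 2 * real n * spec_norm (Qs - Qr)" using r1 r2 b1 b2 by linarith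
  finally show ?thesis .
qed

end
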